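(* Let $(x,y,p)$ be an optimal solution of the RMP and let $(\alpha,\beta,\gamma,\delta,\mu,\phi,\psi)$ be an optimal solution of the DRMP (so both have the same objective value). Then: (a) There exists a cost-invariant lifting of $(\alpha,\beta,\gamma,\delta,\mu,\phi,\psi)$ that is fully compensating and feasible for the DMP if and only if the characteristic lifting $(\alpha,\check\beta,\gamma,\check\delta,\mu,\phi,\psi)$ is fully compensating and feasible for the DMP. (b) Suppose the following three families of inequalities hold: 1. $\bar c_{b,l,m}\ge 0$ for all $b\in\mathcal B$, $l\in L(b)$, $m\in\mathcal M\setminus M(b,l)$; 2. for all $l\in\mathcal L'\setminus\bigcap_{b\in\mathcal B}L(b)$: $$-\sum_{b\in\mathcal B:\ l\notin L(b)}\Bigl(\min_{m\in\mathcal M}\bar c_{b,l,m}\Bigr)^-\ \ge\ \sum_{b\in\mathcal B:\ l\in L(b)}\beta_{b,l}-\gamma-\delta_l+\chi_l\mu;$$ 3. for all $l\in\mathcal L\setminus\mathcal L'$: $$-\sum_{b\in\mathcal B}\Bigl(\min_{m\in\mathcal M}\bar c_{b,l,m}\Bigr)^-+\Bigl(\min_{b\in\mathcal B,\,m\in\mathcal M}\bar c_{b,l,m}\Bigr)^+\ \ge\ -\gamma+\mu.$$ Then the vector $(\bar x,\bar y,\bar p)$ obtained from $(x,y,p)$ by setting all variables of the MP that are absent from the RMP to zero is an optimal solution of the MP. Moreover, these three families hold if and only if the characteristic lifting is fully compensating and feasible for the DMP; consequently, if any one of these inequalities is violated, then no cost-invariant lifting of $(\alpha,\beta,\gamma,\delta,\mu,\phi,\psi)$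 is both fully compensating and feasible for the DMP.
   Context: Let $\mathcal B$ (branches) and $\mathcal S$ (sizes) be finite nonempty sets, $\mathcal M\subset\mathbb N$ a finite nonempty set of multiplicities, and $\mathcal L\subset\mathbb N^{\mathcal S}$ a finite nonempty set of lot-types; for $l\in\mathcal L$ write $|l|:=\sum_{s\in\mathcal S}l_s$. Let costs $c_{b,l,m}\ge 0$ ($b\in\mathcal B,l\in\mathcal L,m\in\mathcal M$), an integer $k\ge 0$, reals $\underline I\le\overline I$ and a constant $P>0$ be given. Let $\mathcal L''\subseteq\mathcal L'\subseteq\mathcal L$, for each $b\in\mathcal B$ let $L(b)\subseteq\mathcal L'$, and for each $b$ and $l\in L(b)$ let $M(b,l)\subseteq\mathcal M$ be nonempty. Put $\chi_l:=1$ if $l\notin\mathcal L''$ and $\chi_l:=0$ if $l\in\mathcal L''$. For real $t$, $(t)^+:=\max\{t,0\}$ and $(t)^-:=\max\{-t,0\}$. Master problem (MP): the linear program in variables $x_{b,l,m}\ge0$ ($b\in\mathcal B,l\in\mathcal L,m\in\mathcal M$), $y_l\ge0$ ($l\in\mathcal L$), $p\ge 0$: minimize $\sum_{b,l,m}c_{b,l,m}x_{b,l,m}+Pp$ subject to ($\alpha_b$) $\sum_{l,m}x_{b,l,m}=1$ for all $b$; ($\beta_{b,l}$) $y_l-\sum_m x_{b,l,m}\ge 0$ for all $b,l$; ($\gamma$) $-\sum_l y_l\ge -k$; ($\delta_l$) $\sum_{b,m}x_{b,l,m}-y_l\ge0$ for all $l$; ($\mu$) $\sum_{l\in\mathcal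 L\setminus\mathcal L''}y_l+p\ge1$; ($\phi$) $\sum_{b,l,m}m|l|x_{b,l,m}\ge\underline I$; ($\psi$) $-\sum_{b,l,m}m|l|x_{b,l,m}\ge-\overline I$. The symbol in parentheses names the dual variable of each constraint. Restricted master problem (RMP): the same LP but containing only the variables $x_{b,l,m}$ with $l\in L(b)$, $m\in M(b,l)$, the variables $y_l$ with $l\in\mathcal L'$, and $p$; only the $\beta_{b,l}$-constraints with $l\in L(b)$ and the $\delta_l$-constraints with $l\in\mathcal L'$ are kept, and all sums are restricted to the present variables. Dual master problem (DMP): variables $\alpha_b\in\mathbb R$, $\beta_{b,l}\ge0$ (all $b\in\mathcal B,l\in\mathcal L$), $\gamma\ge0$, $\delta_l\ge0$ (all $l\in\mathcal L$), $\mu\ge0$, $\phi,\psi\ge0$; maximize $\sum_b\alpha_b-k\gamma+\underline I\phi-\overline I\psi+\mu$ subject to the $x$-constraints $\alpha_b-\beta_{b,l}+\delta_l+m|l|(\phi-\psi)\le c_{b,l,m}$ for all $b,l,m$, the $y$-constraints $\sum_{b\in\mathcal B}\beta_{b,l}-\gamma-\delta_l+\chi_l\mu\le 0$ for all $l\in\mathcal L$, and the $p$-constraint $\mu\le P$. The dual restricted master problem (DRMP) is the LP dual of the RMP: variables $\alpha_b$, $\beta_{b,l}$ ($l\in L(b)$), $\gamma$, $\delta_l$ ($l\in\mathcal L'$), $\mu,\phi,\psi$ with the same sign conditions and objective, $x$-constraints only for $l\in L(b)$, $m\in M(b,l)$, $y$-constraints $\sum_{b:\,l\in L(b)}\beta_{b,l}-\gamma-\delta_l+\chi_l\mu\le0$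 for $l\in\mathcal L'$, and $\mu\le P$. Given a DRMP solution $(\alpha,\beta,\gamma,\delta,\mu,\phi,\psi)$: its canonical lifting sets $\bar\beta_{b,l}:=\beta_{b,l}$ if $l\in L(b)$ and $0$ otherwise, $\bar\delta_l:=\delta_l$ if $l\in\mathcal L'$ and $0$ otherwise. The (uncompensated) reduced cost is $\bar c_{b,l,m}:=c_{b,l,m}-\alpha_b+\bar\beta_{b,l}-\bar\delta_l-m|l|(\phi-\psi)$ for all $b\in\mathcal B,l\in\mathcal L,m\in\mathcal M$. A cost-invariant lifting is any assignment $(\hat\alpha,\hat\beta,\hat\gamma,\hat\delta,\hat\mu,\hat\phi,\hat\psi)$ of all DMP variables that coincides with $(\alpha,\beta,\gamma,\delta,\mu,\phi,\psi)$ on all DRMP components and whose DMP objective equals the DRMP objective of $(\alpha,\ldots,\psi)$. It is fully compensating if it satisfies all $x$-constraints of the DMP. The characteristic lifting is $(\alpha,\check\beta,\gamma,\check\delta,\mu,\phi,\psi)$ with $\check\beta_{b,l}:=\beta_{b,l}$ if $l\in L(b)$ and $\check\beta_{b,l}:=(\min_{m\in\mathcal M}\bar c_{b,l,m})^-$ if $l\in\mathcal L\setminus L(b)$; $\check\delta_l:=\delta_l$ if $l\in\mathcal L'$ and $\check\delta_l:=(\min_{b\in\mathcal B,m\in\mathcal M}\bar c_{b,l,m})^+$ if $l\in\mathcal L\setminus\mathcal L'$. *)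

theory Defs
  imports Complex_Main
begin

(* Lot-types are vectors in N^S, modelled as functions 's => nat; |l| = sum over S. *)
definition lsize :: "'s set \<Rightarrow> ('s \<Rightarrow> nat) \<Rightarrow> real" where
  "lsize Ss l = real (\<Sum>s\<in>Ss. l s)"

definition posp :: "real \<Rightarrow> real" where "posp t = max t 0"
definition negp :: "real \<Rightarrow> real" where "negp t = max (- t) 0"

definition chi :: "('s \<Rightarrow> nat) set \<Rightarrow> ('s \<Rightarrow> nat) \<Rightarrow> real" where
  "chi L2 l = (if l \<in> L2 then 0 else 1)"

definition mp_obj ::
  "'b set \<Rightarrow> ('s \<Rightarrow> nat) set \<Rightarrow> nat set \<Rightarrow> ('b \<Rightarrow> ('s \<Rightarrow> nat) \<Rightarrow> nat \<Rightarrow> real) \<Rightarrow> real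
   \<Rightarrow> ('b \<Rightarrow> ('s \<Rightarrow> nat) \<Rightarrow> nat \<Rightarrow> real) \<Rightarrow> real \<Rightarrow> real" where
  "mp_obj Bs Ls Ms c P x p =
     (\<Sum>b\<in>Bs. \<Sum>l\<in>Ls. \<Sum>m\<in>Ms. c b l m * x b l m) + P * p"

definition mp_feasible ::
  "'b set \<Rightarrow> 's set \<Rightarrow> ('s \<Rightarrow> nat) set \<Rightarrow> nat set \<Rightarrow> nat \<Rightarrow> real \<Rightarrow> real \<Rightarrow> ('s \<Rightarrow> nat) set
   \<Rightarrow> ('b \<Rightarrow> ('s \<Rightarrow> nat) \<Rightarrow> nat \<Rightarrow> real) \<Rightarrow> (('s \<Rightarrow> nat) \<Rightarrow> real) \<Rightarrow> real \<Rightarrow> bool" where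
  "mp_feasible Bs Ss Ls Ms k Ilo Ihi L2 x y p \<longleftrightarrow>
     (\<forall>b\<in>Bs. \<forall>l\<in>Ls. \<forall>m\<in>Ms. x b l m \<ge> 0) \<and> (\<forall>l\<in>Ls. y l \<ge> 0) \<and> p \<ge> 0 \<and>
     (\<forall>b\<in>Bs. (\<Sum>l\<in>Ls. \<Sum>m\<in>Ms. x b l m) = 1) \<and>
     (\<forall>b\<in>Bs. \<forall>l\<in>Ls. y l - (\<Sum>m\<in>Ms. x b l m) \<ge> 0) \<and>
     - (\<Sum>l\<in>Ls. y l) \<ge> - real k \<and>
     (\<forall>l\<in>Ls. (\<Sum>b\<in>Bs. \<Sum>m\<in>Ms. x b l m) - y l \<ge> 0) \<and>
     (\<Sum>l\<in>Ls - L2. y l) + p \<ge> 1 \<and>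
     (\<Sum>b\<in>Bs. \<Sum>l\<in>Ls. \<Sum>m\<in>Ms. real m * lsize Ss l * x b l m) \<ge> Ilo \<and>
     - (\<Sum>b\<in>Bs. \<Sum>l\<in>Ls. \<Sum>m\<in>Ms. real m * lsize Ss l * x b l m) \<ge> - Ihi"

definition mp_optimal where
  "mp_optimal Bs Ss Ls Ms c k Ilo Ihi P L2 x y p \<longleftrightarrow>
     mp_feasible Bs Ss Ls Ms k Ilo Ihi L2 x y p \<and>
     (\<forall>x' y' p'. mp_feasible Bs Ss Ls Ms k Ilo Ihi L2 x' y' p' \<longrightarrow>
        mp_obj Bs Ls Ms c P x p \<le> mp_obj Bs Ls Ms c P x' p')"

(* ---------- Restricted master problem ----------
   Variables are total functions, but only the entries x b l m with b \<in> Bs, l \<in> Lb b,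
   m \<in> Mb b l, the entries y l with l \<in> L1, and p are RMP variables; all other
   entries are ignored. *)
definition rmp_obj where
  "rmp_obj Bs c P Lb Mb x p =
     (\<Sum>b\<in>Bs. \<Sum>l\<in>Lb b. \<Sum>m\<in>Mb b l. c b l m * x b l m) + P * p"

definition rmp_feasible where
  "rmp_feasible Bs Ss k Ilo Ihi L1 L2 Lb Mb x y p \<longleftrightarrow>
     (\<forall>b\<in>Bs. \<forall>l\<in>Lb b. \<forall>m\<in>Mb b l. x b l m \<ge> 0) \<and> (\<forall>l\<in>L1. y l \<ge> 0) \<and> (p::real) \<ge> 0 \<and>
     (\<forall>b\<in>Bs. (\<Sum>l\<in>Lb b. \<Sum>m\<in>Mb b l. x b l m) = 1) \<and>
     (\<forall>b\<in>Bs. \<forall>l\<in>Lb b. y l - (\<Sum>m\<in>Mb b l. x b l m) \<ge> 0) \<and>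
     - (\<Sum>l\<in>L1. y l) \<ge> - real (k::nat) \<and>
     (\<forall>l\<in>L1. (\<Sum>b\<in>{b\<in>Bs. l \<in> Lb b}. \<Sum>m\<in>Mb b l. x b l m) - y l \<ge> 0) \<and>
     (\<Sum>l\<in>L1 - L2. y l) + p \<ge> 1 \<and>
     (\<Sum>b\<in>Bs. \<Sum>l\<in>Lb b. \<Sum>m\<in>Mb b l. real m * lsize Ss l * x b l m) \<ge> Ilo \<and>
     - (\<Sum>b\<in>Bs. \<Sum>l\<in>Lb b. \<Sum>m\<in>Mb b l. real m * lsize Ss l * x b l m) \<ge> - Ihi"

definition rmp_optimal where
  "rmp_optimal Bs Ss c k Ilo Ihi P L1 L2 Lb Mb x y p \<longleftrightarrow>
     rmp_feasible Bs Ss k Ilo Ihi L1 L2 Lb Mb x y p \<and>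
     (\<forall>x' y' p'. rmp_feasible Bs Ss k Ilo Ihi L1 L2 Lb Mb x' y' p' \<longrightarrow>
        rmp_obj Bs c P Lb Mb x p \<le> rmp_obj Bs c P Lb Mb x' p')"

definition xbar where
  "xbar Bs Lb Mb x = (\<lambda>b l m. if b \<in> Bs \<and> l \<in> Lb b \<and> m \<in> Mb b l then x b l m else 0)"

definition ybar where
  "ybar L1 y = (\<lambda>l. if l \<in> L1 then y l else (0::real))"

definition dmp_obj where
  "dmp_obj Bs k Ilo Ihi \<alpha> \<gamma> \<mu> \<phi> \<psi> =
     (\<Sum>b\<in>Bs. \<alpha> b) - real (k::nat) * \<gamma> + Ilo * \<phi> - Ihi * \<psi> + (\<mu>::real)"

(* "fully compensating": all x-constraints of the DMP hold *)
definition dmp_xcons where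
  "dmp_xcons Bs Ss Ls Ms c \<alpha> \<beta> \<delta> \<phi> \<psi> \<longleftrightarrow>
     (\<forall>b\<in>Bs. \<forall>l\<in>Ls. \<forall>m\<in>Ms.
        \<alpha> b - \<beta> b l + \<delta> l + real m * lsize Ss l * (\<phi> - \<psi>) \<le> c b l m)"

definition dmp_feasible where
  "dmp_feasible Bs Ss Ls Ms c P L2 \<alpha> \<beta> \<gamma> \<delta> \<mu> \<phi> \<psi> \<longleftrightarrow>
     (\<forall>b\<in>Bs. \<forall>l\<in>Ls. \<beta> b l \<ge> 0) \<and> \<gamma> \<ge> 0 \<and> (\<forall>l\<in>Ls. \<delta> l \<ge> 0) \<and>
     \<mu> \<ge> 0 \<and> \<phi> \<ge> 0 \<and> \<psi> \<ge> 0 \<and>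
     dmp_xcons Bs Ss Ls Ms c \<alpha> \<beta> \<delta> \<phi> \<psi> \<and>
     (\<forall>l\<in>Ls. (\<Sum>b\<in>Bs. \<beta> b l) - \<gamma> - \<delta> l + chi L2 l * \<mu> \<le> 0) \<and>
     \<mu> \<le> (P::real)"

definition drmp_feasible where
  "drmp_feasible Bs Ss c P L1 L2 Lb Mb \<alpha> \<beta> \<gamma> \<delta> \<mu> \<phi> \<psi> \<longleftrightarrow>
     (\<forall>b\<in>Bs. \<forall>l\<in>Lb b. \<beta> b l \<ge> 0) \<and> \<gamma> \<ge> 0 \<and> (\<forall>l\<in>L1. \<delta> l \<ge> 0) \<and>
     \<mu> \<ge> 0 \<and> \<phi> \<ge> 0 \<and> \<psi> \<ge> 0 \<and>
     (\<forall>b\<in>Bs. \<forall>l\<in>Lb b. \<forall>m\<in>Mb b l.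
        \<alpha> b - \<beta> b l + \<delta> l + real m * lsize Ss l * (\<phi> - \<psi>) \<le> c b l m) \<and>
     (\<forall>l\<in>L1. (\<Sum>b\<in>{b\<in>Bs. l \<in> Lb b}. \<beta> b l) - \<gamma> - \<delta> l + chi L2 l * \<mu> \<le> 0) \<and>
     \<mu> \<le> (P::real)"

definition drmp_optimal where
  "drmp_optimal Bs Ss c k Ilo Ihi P L1 L2 Lb Mb \<alpha> \<beta> \<gamma> \<delta> \<mu> \<phi> \<psi> \<longleftrightarrow>
     drmp_feasible Bs Ss c P L1 L2 Lb Mb \<alpha> \<beta> \<gamma> \<delta> \<mu> \<phi> \<psi> \<and>
     (\<forall>\<alpha>' \<beta>' \<gamma>' \<delta>' \<mu>' \<phi>' \<psi>'.
        drmp_feasible Bs Ss c P L1 L2 Lb Mb \<alpha>' \<beta>' \<gamma>' \<delta>' \<mu>' \<phi>' \<psi>' \<longrightarrow>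
        dmp_obj Bs k Ilo Ihi \<alpha>' \<gamma>' \<mu>' \<phi>' \<psi>' \<le> dmp_obj Bs k Ilo Ihi \<alpha> \<gamma> \<mu> \<phi> \<psi>)"

definition betabar where
  "betabar Lb \<beta> = (\<lambda>b l. if l \<in> Lb b then \<beta> b l else (0::real))"

definition deltabar where
  "deltabar L1 \<delta> = (\<lambda>l. if l \<in> L1 then \<delta> l else (0::real))"

definition redcost where
  "redcost Ss c L1 Lb \<alpha> \<beta> \<delta> \<phi> \<psi> b l m =
     c b l m - \<alpha> b + betabar Lb \<beta> b l - deltabar L1 \<delta> l - real m * lsize Ss l * (\<phi> - \<psi>)"

definition cost_invariant_lifting where
  "cost_invariant_lifting Bs k Ilo Ihi L1 Lb \<alpha> \<beta> \<gamma> \<delta> \<mu> \<phi> \<psi> \<alpha>' \<beta>' \<gamma>' \<delta>' \<mu>' \<phi>' \<psi>' \<longleftrightarrow>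
     (\<forall>b\<in>Bs. \<alpha>' b = \<alpha> b) \<and> (\<forall>b\<in>Bs. \<forall>l\<in>Lb b. \<beta>' b l = \<beta> b l) \<and> \<gamma>' = \<gamma> \<and>
     (\<forall>l\<in>L1. \<delta>' l = \<delta> l) \<and> \<mu>' = \<mu> \<and> \<phi>' = \<phi> \<and> \<psi>' = \<psi> \<and>
     dmp_obj Bs k Ilo Ihi \<alpha>' \<gamma>' \<mu>' \<phi>' \<psi>' = dmp_obj Bs k Ilo Ihi \<alpha> \<gamma> \<mu> \<phi> \<psi>"

definition betacheck where
  "betacheck Ss Ms c L1 Lb \<alpha> \<beta> \<delta> \<phi> \<psi> = (\<lambda>b l.
     if l \<in> Lb b then \<beta> b l
     else negp (Min ((\<lambda>m. redcost Ss c L1 Lb \<alpha> \<beta> \<delta> \<phi> \<psi> b l m) ` Ms)))"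

definition deltacheck where
  "deltacheck Bs Ss Ms c L1 Lb \<alpha> \<beta> \<delta> \<phi> \<psi> = (\<lambda>l.
     if l \<in> L1 then \<delta> l
     else posp (Min ((\<lambda>(b, m). redcost Ss c L1 Lb \<alpha> \<beta> \<delta> \<phi> \<psi> b l m) ` (Bs \<times> Ms))))"

end

theory Submission
  imports Defs
begin


lemma np_facts:
  "negp t \<ge> 0" "negp t \<ge> - t" "posp t \<ge> 0" "posp t \<ge> t" "posp t - negp t = t"
  by (auto simp: negp_def posp_def)

lemma posp_mono: "t \<le> s \<Longrightarrow> posp t \<le> posp s" by (auto simp: posp_def)

lemma negp_le: "b \<ge> 0 \<Longrightarrow> b \<ge> - t \<Longrightarrow> negp t \<le> b" by (auto simp: negp_def)

lemma sum_split: "finite A \<Longrightarrow> sum f A = sum f {a\<in>A. P a} + sum f {a\<in>A. \<not> P a}"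
proof -
  assume fA: "finite A"
  have "A = {a\<in>A. P a} \<union> {a\<in>A. \<not> P a}" by auto
  then have "sum f A = sum f ({a\<in>A. P a} \<union> {a\<in>A. \<not> P a})" by (rule arg_cong)
  also have "\<dots> = sum f {a\<in>A. P a} + sum f {a\<in>A. \<not> P a}"
    using fA by (intro sum.union_disjoint) auto
  finally show ?thesis .
qed



lemma weak_dual:
  fixes Bs :: "'b set" and Ls :: "('s \<Rightarrow> nat) set" and Ms :: "nat set"
  assumes fin: "finite Bs" "finite Ls" "finite Ms"
    and pf: "mp_feasible Bs Ss Ls Ms k Ilo Ihi L2 x y p"
    and df: "dmp_feasible Bs Ss Ls Ms c P L2 \<alpha> \<beta> \<gamma> \<delta> \<mu> \<phi> \<psi>"
  shows "dmp_obj Bs k Ilo Ihi \<alpha> \<gamma> \<mu> \<phi> \<psi> \<le> mp_obj Bs Ls Ms c P x p"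
proof -
  define w where "w = (\<lambda>l m. real m * lsize Ss l)"
  define X where "X = (\<lambda>b l. \<Sum>m\<in>Ms. x b l m)"
  define W where "W = (\<Sum>b\<in>Bs. \<Sum>l\<in>Ls. \<Sum>m\<in>Ms. w l m * x b l m)"
  note pf' = pf[unfolded mp_feasible_def, folded w_def]
  note df' = df[unfolded dmp_feasible_def dmp_xcons_def, folded w_def]
  have xnn: "\<And>b l m. b\<in>Bs \<Longrightarrow> l\<in>Ls \<Longrightarrow> m\<in>Ms \<Longrightarrow> x b l m \<ge> 0" using pf' by blast
  have S1: "(\<Sum>b\<in>Bs. \<Sum>l\<in>Ls. \<Sum>m\<in>Ms. (\<alpha> b - \<beta> b l + \<delta> l + w l m * (\<phi> - \<psi>)) * x b l m)
      \<le> (\<Sum>b\<in>Bs. \<Sum>l\<in>Ls. \<Sum>m\<in>Ms. c b l m * x b l m)"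
    apply (intro sum_mono)
    apply (rule mult_right_mono)
    using df' xnn by (auto simp: w_def)
  have S2: "(\<Sum>b\<in>Bs. \<Sum>l\<in>Ls. \<Sum>m\<in>Ms. (\<alpha> b - \<beta> b l + \<delta> l + w l m * (\<phi> - \<psi>)) * x b l m)
     = (\<Sum>b\<in>Bs. \<alpha> b * (\<Sum>l\<in>Ls. X b l)) - (\<Sum>b\<in>Bs. \<Sum>l\<in>Ls. \<beta> b l * X b l)
       + (\<Sum>l\<in>Ls. \<delta> l * (\<Sum>b\<in>Bs. X b l)) + (\<phi> - \<psi>) * W"
    unfolding X_def W_def
    by (simp add: algebra_simps sum.distrib sum_subtractf sum_distrib_left sum_distrib_right sum.swap[of _ Bs Ls])
  have Ta: "(\<Sum>b\<in>Bs. \<alpha> b * (\<Sum>l\<in>Ls. X b l)) = (\<Sum>b\<in>Bs. \<alpha> b)"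
    using pf' unfolding X_def by simp
  have Tb: "(\<Sum>b\<in>Bs. \<Sum>l\<in>Ls. \<beta> b l * X b l) \<le> (\<Sum>l\<in>Ls. y l * (\<Sum>b\<in>Bs. \<beta> b l))"
  proof -
    have "(\<Sum>b\<in>Bs. \<Sum>l\<in>Ls. \<beta> b l * X b l) \<le> (\<Sum>b\<in>Bs. \<Sum>l\<in>Ls. \<beta> b l * y l)"
      apply (intro sum_mono) apply (rule mult_left_mono) using pf' df' unfolding X_def by auto
    also have "\<dots> = (\<Sum>l\<in>Ls. y l * (\<Sum>b\<in>Bs. \<beta> b l))"
      by (simp add: sum_distrib_left sum.swap[of _ Bs Ls] mult.commute)
    finally show ?thesis .
  qed
  have Td: "(\<Sum>l\<in>Ls. \<delta> l * (\<Sum>b\<in>Bs. X b l)) \<ge> (\<Sum>l\<in>Ls. \<delta> l * y l)"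
    apply (intro sum_mono) apply (rule mult_left_mono) using pf' df' unfolding X_def by auto
  have Wlo: "\<phi> * W \<ge> \<phi> * Ilo" using pf' df' unfolding W_def w_def by (auto intro: mult_left_mono)
  have Whi: "\<psi> * W \<le> \<psi> * Ihi" using pf' df' unfolding W_def w_def by (auto intro: mult_left_mono)
  have Ty: "(\<Sum>l\<in>Ls. y l * (\<delta> l - (\<Sum>b\<in>Bs. \<beta> b l))) \<ge> (\<Sum>l\<in>Ls. y l * (chi L2 l * \<mu> - \<gamma>))"
    apply (intro sum_mono) apply (rule mult_left_mono) using pf' df' by auto
  have Tc: "(\<Sum>l\<in>Ls. y l * (chi L2 l * \<mu> - \<gamma>)) = \<mu> * (\<Sum>l\<in>Ls - L2. y l) - \<gamma> * (\<Sum>l\<in>Ls. y l)"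
  proof -
    have "(\<Sum>l\<in>Ls. y l * (chi L2 l * \<mu>)) = \<mu> * (\<Sum>l\<in>Ls - L2. y l)"
    proof -
      have "Ls - L2 = {l\<in>Ls. l \<notin> L2}" by auto
      then have "(\<Sum>l\<in>Ls - L2. y l) = (\<Sum>l\<in>Ls. if l \<notin> L2 then y l else 0)"
        using fin by (simp add: sum.inter_filter)
      moreover have "(\<Sum>l\<in>Ls. y l * (chi L2 l * \<mu>)) = \<mu> * (\<Sum>l\<in>Ls. if l \<notin> L2 then y l else 0)"
        unfolding sum_distrib_left by (rule sum.cong) (auto simp: chi_def)
      ultimately show ?thesis by simp
    qed
    then show ?thesis by (simp add: algebra_simps sum_subtractf sum_distrib_left)
  qed
  have g1: "\<gamma> * (\<Sum>l\<in>Ls. y l) \<le> \<gamma> * real k" using pf' df' by (auto intro: mult_left_mono)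
  have m1: "\<mu> * (\<Sum>l\<in>Ls - L2. y l) \<ge> \<mu> * (1 - p)" using pf' df' by (auto intro: mult_left_mono)
  have Pp: "P * p \<ge> \<mu> * p" using pf' df' by (auto intro: mult_right_mono)
  have split: "(\<Sum>l\<in>Ls. y l * (\<delta> l - (\<Sum>b\<in>Bs. \<beta> b l))) = (\<Sum>l\<in>Ls. \<delta> l * y l) - (\<Sum>l\<in>Ls. y l * (\<Sum>b\<in>Bs. \<beta> b l))"
    by (simp add: algebra_simps sum_subtractf)
  show ?thesis
    unfolding dmp_obj_def mp_obj_def W_def w_def
    using S1 S2 Ta Tb Td Wlo Whi Ty Tc g1 m1 Pp split
    by (simp add: algebra_simps)
qed



lemma xbar_sum:
  fixes x :: "'b \<Rightarrow> 'l \<Rightarrow> nat \<Rightarrow> real"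
  assumes fin: "finite Ls" "finite Ms" and b: "b \<in> Bs" and sub: "Lb b \<subseteq> Ls"
    and msub: "\<forall>l\<in>Lb b. Mb b l \<subseteq> Ms"
  shows "(\<Sum>l\<in>Ls. \<Sum>m\<in>Ms. F l m * xbar Bs Lb Mb x b l m) = (\<Sum>l\<in>Lb b. \<Sum>m\<in>Mb b l. F l m * x b l m)"
proof -
  have "(\<Sum>l\<in>Ls. \<Sum>m\<in>Ms. F l m * xbar Bs Lb Mb x b l m)
      = (\<Sum>l\<in>Ls. if l \<in> Lb b then (\<Sum>m\<in>Ms \<inter> Mb b l. F l m * x b l m) else 0)"
  proof (rule sum.cong)
    fix l assume "l \<in> Ls"
    have "(\<Sum>m\<in>Ms. F l m * xbar Bs Lb Mb x b l m) = (\<Sum>m\<in>Ms. if m \<in> Mb b l then (if l \<in> Lb b then F l m * x b l m else 0) else 0)"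
      using b by (intro sum.cong) (auto simp: xbar_def)
    also have "\<dots> = (\<Sum>m\<in>Ms \<inter> Mb b l. if l \<in> Lb b then F l m * x b l m else 0)"
      using fin(2) by (rule sum.inter_restrict[symmetric])
    finally show "(\<Sum>m\<in>Ms. F l m * xbar Bs Lb Mb x b l m) = (if l \<in> Lb b then (\<Sum>m\<in>Ms \<inter> Mb b l. F l m * x b l m) else 0)"
      by simp
  qed simp
  also have "\<dots> = (\<Sum>l\<in>Ls \<inter> Lb b. (\<Sum>m\<in>Ms \<inter> Mb b l. F l m * x b l m))"
    using fin(1) by (rule sum.inter_restrict[symmetric])
  also have "\<dots> = (\<Sum>l\<in>Lb b. \<Sum>m\<in>Mb b l. F l m * x b l m)"
    using sub msub by (auto intro!: sum.cong simp: Int_absorb1 Int_absorb2)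
  finally show ?thesis .
qed

lemma xbar_feas:
  assumes fin: "finite Bs" "finite Ls" "finite Ms"
    and L_sub: "L2 \<subseteq> L1" "L1 \<subseteq> Ls" "\<forall>b\<in>Bs. Lb b \<subseteq> L1"
    and M_sub: "\<forall>b\<in>Bs. \<forall>l\<in>Lb b. Mb b l \<subseteq> Ms \<and> Mb b l \<noteq> {}"
    and rf: "rmp_feasible Bs Ss k Ilo Ihi L1 L2 Lb Mb x y p"
  shows "mp_feasible Bs Ss Ls Ms k Ilo Ihi L2 (xbar Bs Lb Mb x) (ybar L1 y) p"
    and "mp_obj Bs Ls Ms c P (xbar Bs Lb Mb x) p = rmp_obj Bs c P Lb Mb x p"
proof -
  note r = rf[unfolded rmp_feasible_def]
  have LbLs: "\<And>b. b \<in> Bs \<Longrightarrow> Lb b \<subseteq> Ls" using L_sub by blast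
  have ms: "\<And>b. b \<in> Bs \<Longrightarrow> \<forall>l\<in>Lb b. Mb b l \<subseteq> Ms" using M_sub by blast
  have S: "\<And>b F. b \<in> Bs \<Longrightarrow> (\<Sum>l\<in>Ls. \<Sum>m\<in>Ms. F l m * xbar Bs Lb Mb x b l m) = (\<Sum>l\<in>Lb b. \<Sum>m\<in>Mb b l. F l m * x b l m)"
    by (rule xbar_sum[OF fin(2) fin(3)]) (use LbLs ms in auto)
  have S1: "\<And>b. b \<in> Bs \<Longrightarrow> (\<Sum>l\<in>Ls. \<Sum>m\<in>Ms. xbar Bs Lb Mb x b l m) = (\<Sum>l\<in>Lb b. \<Sum>m\<in>Mb b l. x b l m)"
    using S[of _ "\<lambda>_ _. 1"] by simp
  have S2: "\<And>b l. b \<in> Bs \<Longrightarrow> (\<Sum>m\<in>Ms. xbar Bs Lb Mb x b l m) = (if l \<in> Lb b then (\<Sum>m\<in>Mb b l. x b l m) else 0)"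
  proof -
    fix b l assume b: "b \<in> Bs"
    show "?thesis b l"
    proof (cases "l \<in> Lb b")
      case True
      have "(\<Sum>m\<in>Ms. xbar Bs Lb Mb x b l m) = (\<Sum>m\<in>Ms. if m \<in> Mb b l then x b l m else 0)"
        using b True by (intro sum.cong) (auto simp: xbar_def)
      also have "\<dots> = (\<Sum>m\<in>Ms \<inter> Mb b l. x b l m)"
        using fin(3) by (rule sum.inter_restrict[symmetric])
      finally have "(\<Sum>m\<in>Ms. xbar Bs Lb Mb x b l m) = (\<Sum>m\<in>Ms \<inter> Mb b l. x b l m)" .
      also have "\<dots> = (\<Sum>m\<in>Mb b l. x b l m)" using True b M_sub by (simp add: Int_absorb1)
      finally show ?thesis using True by simp
    qed (simp add: xbar_def)
  qed
  have S3: "\<And>l. (\<Sum>b\<in>Bs. \<Sum>m\<in>Ms. xbar Bs Lb Mb x b l m) = (\<Sum>b\<in>{b\<in>Bs. l \<in> Lb b}. \<Sum>m\<in>Mb b l. x b l m)"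
    using S2 fin by (simp add: sum.inter_filter)
  have Y1: "(\<Sum>l\<in>Ls. ybar L1 y l) = (\<Sum>l\<in>L1. y l)"
  proof -
    have "(\<Sum>l\<in>Ls. ybar L1 y l) = (\<Sum>l\<in>Ls \<inter> L1. y l)"
      unfolding ybar_def using fin(2) by (rule sum.inter_restrict[symmetric])
    also have "Ls \<inter> L1 = L1" using L_sub by blast
    finally show ?thesis .
  qed
  have Y2: "(\<Sum>l\<in>Ls - L2. ybar L1 y l) = (\<Sum>l\<in>L1 - L2. y l)"
  proof -
    have "(\<Sum>l\<in>Ls - L2. ybar L1 y l) = (\<Sum>l\<in>(Ls - L2) \<inter> L1. y l)"
      unfolding ybar_def using fin(2) by (intro sum.inter_restrict[symmetric]) auto
    also have "(Ls - L2) \<inter> L1 = L1 - L2" using L_sub by blast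
    finally show ?thesis .
  qed
  have I: "(\<Sum>b\<in>Bs. \<Sum>l\<in>Ls. \<Sum>m\<in>Ms. real m * lsize Ss l * xbar Bs Lb Mb x b l m)
        = (\<Sum>b\<in>Bs. \<Sum>l\<in>Lb b. \<Sum>m\<in>Mb b l. real m * lsize Ss l * x b l m)"
    apply (rule sum.cong[OF refl]) using S[of _ "\<lambda>l m. real m * lsize Ss l"] by simp
  have C: "(\<Sum>b\<in>Bs. \<Sum>l\<in>Ls. \<Sum>m\<in>Ms. c b l m * xbar Bs Lb Mb x b l m)
        = (\<Sum>b\<in>Bs. \<Sum>l\<in>Lb b. \<Sum>m\<in>Mb b l. c b l m * x b l m)"
  proof (rule sum.cong)
    fix b assume "b \<in> Bs"
    then show "(\<Sum>l\<in>Ls. \<Sum>m\<in>Ms. c b l m * xbar Bs Lb Mb x b l m) = (\<Sum>l\<in>Lb b. \<Sum>m\<in>Mb b l. c b l m * x b l m)"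
      by (rule S)
  qed simp
  show "mp_obj Bs Ls Ms c P (xbar Bs Lb Mb x) p = rmp_obj Bs c P Lb Mb x p"
    unfolding mp_obj_def rmp_obj_def using C by simp
  show "mp_feasible Bs Ss Ls Ms k Ilo Ihi L2 (xbar Bs Lb Mb x) (ybar L1 y) p"
    unfolding mp_feasible_def
  proof (intro conjI)
    show "\<forall>b\<in>Bs. \<forall>l\<in>Ls. \<forall>m\<in>Ms. 0 \<le> xbar Bs Lb Mb x b l m" using r by (auto simp: xbar_def)
    show "\<forall>l\<in>Ls. 0 \<le> ybar L1 y l" using r by (auto simp: ybar_def)
    show "0 \<le> p" using r by simp
    show "\<forall>b\<in>Bs. (\<Sum>l\<in>Ls. \<Sum>m\<in>Ms. xbar Bs Lb Mb x b l m) = 1" using r S1 by simp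
    show "\<forall>b\<in>Bs. \<forall>l\<in>Ls. 0 \<le> ybar L1 y l - (\<Sum>m\<in>Ms. xbar Bs Lb Mb x b l m)"
      using r S2 L_sub by (auto simp: ybar_def)
    show "- real k \<le> - (\<Sum>l\<in>Ls. ybar L1 y l)" using r Y1 by simp
    show "\<forall>l\<in>Ls. 0 \<le> (\<Sum>b\<in>Bs. \<Sum>m\<in>Ms. xbar Bs Lb Mb x b l m) - ybar L1 y l"
    proof
      fix l assume l: "l \<in> Ls"
      show "0 \<le> (\<Sum>b\<in>Bs. \<Sum>m\<in>Ms. xbar Bs Lb Mb x b l m) - ybar L1 y l"
      proof (cases "l \<in> L1")
        case True then show ?thesis using r S3[of l] by (simp add: ybar_def)
      next
        case False
        have e: "{b\<in>Bs. l \<in> Lb b} = {}" using L_sub False by blast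
        show ?thesis unfolding S3[of l] e using False by (simp add: ybar_def)
      qed
    qed
    show "1 \<le> (\<Sum>l\<in>Ls - L2. ybar L1 y l) + p" using r Y2 by simp
    show "Ilo \<le> (\<Sum>b\<in>Bs. \<Sum>l\<in>Ls. \<Sum>m\<in>Ms. real m * lsize Ss l * xbar Bs Lb Mb x b l m)" using r I by simp
    show "- Ihi \<le> - (\<Sum>b\<in>Bs. \<Sum>l\<in>Ls. \<Sum>m\<in>Ms. real m * lsize Ss l * xbar Bs Lb Mb x b l m)" using r I by simp
  qed
qed



theorem theorem1:
  fixes Bs :: "'b set" and Ss :: "'s set" and Ls :: "('s \<Rightarrow> nat) set" and Ms :: "nat set"
    and c :: "'b \<Rightarrow> ('s \<Rightarrow> nat) \<Rightarrow> nat \<Rightarrow> real" and k :: nat and Ilo Ihi P :: real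
    and L1 L2 :: "('s \<Rightarrow> nat) set" and Lb :: "'b \<Rightarrow> ('s \<Rightarrow> nat) set"
    and Mb :: "'b \<Rightarrow> ('s \<Rightarrow> nat) \<Rightarrow> nat set"
    and x :: "'b \<Rightarrow> ('s \<Rightarrow> nat) \<Rightarrow> nat \<Rightarrow> real" and y :: "('s \<Rightarrow> nat) \<Rightarrow> real" and p :: real
    and \<alpha> :: "'b \<Rightarrow> real" and \<beta> :: "'b \<Rightarrow> ('s \<Rightarrow> nat) \<Rightarrow> real" and \<gamma> :: real
    and \<delta> :: "('s \<Rightarrow> nat) \<Rightarrow> real" and \<mu> \<phi> \<psi> :: real
  assumes fin: "finite Bs" "Bs \<noteq> {}" "finite Ss" "Ss \<noteq> {}" "finite Ms" "Ms \<noteq> {}"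
      "finite Ls" "Ls \<noteq> {}"
    and cost_nonneg: "\<forall>b\<in>Bs. \<forall>l\<in>Ls. \<forall>m\<in>Ms. c b l m \<ge> 0"
    and I_le: "Ilo \<le> Ihi" and P_pos: "P > 0"
    and L_sub: "L2 \<subseteq> L1" "L1 \<subseteq> Ls" "\<forall>b\<in>Bs. Lb b \<subseteq> L1"
    and M_sub: "\<forall>b\<in>Bs. \<forall>l\<in>Lb b. Mb b l \<subseteq> Ms \<and> Mb b l \<noteq> {}"
    and primal_opt: "rmp_optimal Bs Ss c k Ilo Ihi P L1 L2 Lb Mb x y p"
    and dual_opt: "drmp_optimal Bs Ss c k Ilo Ihi P L1 L2 Lb Mb \<alpha> \<beta> \<gamma> \<delta> \<mu> \<phi> \<psi>"
    and same_value: "rmp_obj Bs c P Lb Mb x p = dmp_obj Bs k Ilo Ihi \<alpha> \<gamma> \<mu> \<phi> \<psi>"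
  shows
    "let rc = redcost Ss c L1 Lb \<alpha> \<beta> \<delta> \<phi> \<psi>;
         \<beta>c = betacheck Ss Ms c L1 Lb \<alpha> \<beta> \<delta> \<phi> \<psi>;
         \<delta>c = deltacheck Bs Ss Ms c L1 Lb \<alpha> \<beta> \<delta> \<phi> \<psi>;
         charOK = (dmp_xcons Bs Ss Ls Ms c \<alpha> \<beta>c \<delta>c \<phi> \<psi> \<and>
                   dmp_feasible Bs Ss Ls Ms c P L2 \<alpha> \<beta>c \<gamma> \<delta>c \<mu> \<phi> \<psi>);
         liftOK = (\<exists>\<alpha>' \<beta>' \<gamma>' \<delta>' \<mu>' \<phi>' \<psi>'.
                     cost_invariant_lifting Bs k Ilo Ihi L1 Lb \<alpha> \<beta> \<gamma> \<delta> \<mu> \<phi> \<psi> \<alpha>' \<beta>' \<gamma>' \<delta>' \<mu>' \<phi>' \<psi>' \<and>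
                     dmp_xcons Bs Ss Ls Ms c \<alpha>' \<beta>' \<delta>' \<phi>' \<psi>' \<and>
                     dmp_feasible Bs Ss Ls Ms c P L2 \<alpha>' \<beta>' \<gamma>' \<delta>' \<mu>' \<phi>' \<psi>');
         fam1 = (\<forall>b\<in>Bs. \<forall>l\<in>Lb b. \<forall>m\<in>Ms - Mb b l. rc b l m \<ge> 0);
         fam2 = (\<forall>l\<in>L1 - (\<Inter>b\<in>Bs. Lb b).
                   - (\<Sum>b\<in>{b\<in>Bs. l \<notin> Lb b}. negp (Min ((\<lambda>m. rc b l m) ` Ms)))
                   \<ge> (\<Sum>b\<in>{b\<in>Bs. l \<in> Lb b}. \<beta> b l) - \<gamma> - \<delta> l + chi L2 l * \<mu>);
         fam3 = (\<forall>l\<in>Ls - L1.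
                   - (\<Sum>b\<in>Bs. negp (Min ((\<lambda>m. rc b l m) ` Ms)))
                   + posp (Min ((\<lambda>(b, m). rc b l m) ` (Bs \<times> Ms)))
                   \<ge> - \<gamma> + \<mu>)
     in (liftOK \<longleftrightarrow> charOK) \<and>
        ((fam1 \<and> fam2 \<and> fam3) \<longrightarrow>
           mp_optimal Bs Ss Ls Ms c k Ilo Ihi P L2 (xbar Bs Lb Mb x) (ybar L1 y) p) \<and>
        ((fam1 \<and> fam2 \<and> fam3) \<longleftrightarrow> charOK) \<and>
        (\<not> (fam1 \<and> fam2 \<and> fam3) \<longrightarrow> \<not> liftOK)"
proof -
  define rc where "rc = redcost Ss c L1 Lb \<alpha> \<beta> \<delta> \<phi> \<psi>"
  define \<beta>c where "\<beta>c = betacheck Ss Ms c L1 Lb \<alpha> \<beta> \<delta> \<phi> \<psi>"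
  define \<delta>c where "\<delta>c = deltacheck Bs Ss Ms c L1 Lb \<alpha> \<beta> \<delta> \<phi> \<psi>"
  define charOK where "charOK = (dmp_xcons Bs Ss Ls Ms c \<alpha> \<beta>c \<delta>c \<phi> \<psi> \<and>
                   dmp_feasible Bs Ss Ls Ms c P L2 \<alpha> \<beta>c \<gamma> \<delta>c \<mu> \<phi> \<psi>)"
  define liftOK where "liftOK = (\<exists>\<alpha>' \<beta>' \<gamma>' \<delta>' \<mu>' \<phi>' \<psi>'.
                     cost_invariant_lifting Bs k Ilo Ihi L1 Lb \<alpha> \<beta> \<gamma> \<delta> \<mu> \<phi> \<psi> \<alpha>' \<beta>' \<gamma>' \<delta>' \<mu>' \<phi>' \<psi>' \<and>
                     dmp_xcons Bs Ss Ls Ms c \<alpha>' \<beta>' \<delta>' \<phi>' \<psi>' \<and>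
                     dmp_feasible Bs Ss Ls Ms c P L2 \<alpha>' \<beta>' \<gamma>' \<delta>' \<mu>' \<phi>' \<psi>')"
  define fam1 where "fam1 = (\<forall>b\<in>Bs. \<forall>l\<in>Lb b. \<forall>m\<in>Ms - Mb b l. rc b l m \<ge> 0)"
  define fam2 where "fam2 = (\<forall>l\<in>L1 - (\<Inter>b\<in>Bs. Lb b).
                   - (\<Sum>b\<in>{b\<in>Bs. l \<notin> Lb b}. negp (Min ((\<lambda>m. rc b l m) ` Ms)))
                   \<ge> (\<Sum>b\<in>{b\<in>Bs. l \<in> Lb b}. \<beta> b l) - \<gamma> - \<delta> l + chi L2 l * \<mu>)"
  define fam3 where "fam3 = (\<forall>l\<in>Ls - L1.
                   - (\<Sum>b\<in>Bs. negp (Min ((\<lambda>m. rc b l m) ` Ms)))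
                   + posp (Min ((\<lambda>(b, m). rc b l m) ` (Bs \<times> Ms)))
                   \<ge> - \<gamma> + \<mu>)"
  note d = dual_opt[unfolded drmp_optimal_def drmp_feasible_def]
  have d\<beta>: "\<And>b l. b \<in> Bs \<Longrightarrow> l \<in> Lb b \<Longrightarrow> \<beta> b l \<ge> 0" using d by blast
  have d\<gamma>: "\<gamma> \<ge> 0" using d by blast
  have d\<delta>: "\<And>l. l \<in> L1 \<Longrightarrow> \<delta> l \<ge> 0" using d by blast
  have d\<mu>: "\<mu> \<ge> 0" "\<phi> \<ge> 0" "\<psi> \<ge> 0" "\<mu> \<le> P" using d by blast+
  have dx: "\<And>b l m. b \<in> Bs \<Longrightarrow> l \<in> Lb b \<Longrightarrow> m \<in> Mb b l \<Longrightarrow>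
      \<alpha> b - \<beta> b l + \<delta> l + real m * lsize Ss l * (\<phi> - \<psi>) \<le> c b l m" using d by blast
  have dy: "\<And>l. l \<in> L1 \<Longrightarrow> (\<Sum>b\<in>{b\<in>Bs. l \<in> Lb b}. \<beta> b l) - \<gamma> - \<delta> l + chi L2 l * \<mu> \<le> 0"
    using d by blast
  have rc_eq: "\<And>b l m. rc b l m = c b l m - \<alpha> b + (if l \<in> Lb b then \<beta> b l else 0)
      - (if l \<in> L1 then \<delta> l else 0) - real m * lsize Ss l * (\<phi> - \<psi>)"
    unfolding rc_def redcost_def betabar_def deltabar_def by simp
  have \<beta>c_in: "\<And>b l. l \<in> Lb b \<Longrightarrow> \<beta>c b l = \<beta> b l" unfolding \<beta>c_def betacheck_def by simp
  have \<beta>c_out: "\<And>b l. l \<notin> Lb b \<Longrightarrow> \<beta>c b l = negp (Min ((\<lambda>m. rc b l m) ` Ms))"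
    unfolding \<beta>c_def betacheck_def rc_def by simp
  have \<delta>c_in: "\<And>l. l \<in> L1 \<Longrightarrow> \<delta>c l = \<delta> l" unfolding \<delta>c_def deltacheck_def by simp
  have \<delta>c_out: "\<And>l. l \<notin> L1 \<Longrightarrow> \<delta>c l = posp (Min ((\<lambda>(b, m). rc b l m) ` (Bs \<times> Ms)))"
    unfolding \<delta>c_def deltacheck_def rc_def by simp
  have minle: "\<And>(f::nat \<Rightarrow> real) m. m \<in> Ms \<Longrightarrow> Min (f ` Ms) \<le> f m"
    using fin by (intro Min_le) auto
  have minex: "\<And>(f::nat \<Rightarrow> real). \<exists>m\<in>Ms. Min (f ` Ms) = f m"
  proof -
    fix f :: "nat \<Rightarrow> real"
    have "Min (f ` Ms) \<in> f ` Ms" using fin by (intro Min_in) auto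
    then show "\<exists>m\<in>Ms. Min (f ` Ms) = f m" by auto
  qed
  have minle2: "\<And>l b m. b \<in> Bs \<Longrightarrow> m \<in> Ms \<Longrightarrow> Min ((\<lambda>(b, m). rc b l m) ` (Bs \<times> Ms)) \<le> rc b l m"
  proof -
    fix l b m assume "b \<in> Bs" "m \<in> Ms"
    then have "Min ((\<lambda>(b, m). rc b l m) ` (Bs \<times> Ms)) \<le> (\<lambda>(b, m). rc b l m) (b, m)"
      using fin by (intro Min_le) auto
    then show "Min ((\<lambda>(b, m). rc b l m) ` (Bs \<times> Ms)) \<le> rc b l m" by simp
  qed
  have minex2: "\<And>l. \<exists>b\<in>Bs. \<exists>m\<in>Ms. Min ((\<lambda>(b, m). rc b l m) ` (Bs \<times> Ms)) = rc b l m"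
  proof -
    fix l
    have "Min ((\<lambda>(b, m). rc b l m) ` (Bs \<times> Ms)) \<in> (\<lambda>(b, m). rc b l m) ` (Bs \<times> Ms)"
      using fin by (intro Min_in) auto
    then show "\<exists>b\<in>Bs. \<exists>m\<in>Ms. Min ((\<lambda>(b, m). rc b l m) ` (Bs \<times> Ms)) = rc b l m" by auto
  qed
  have LbL1: "\<And>b l. b \<in> Bs \<Longrightarrow> l \<in> Lb b \<Longrightarrow> l \<in> L1" using L_sub by blast
  have L1Ls: "\<And>l. l \<in> L1 \<Longrightarrow> l \<in> Ls" using L_sub by blast
  have rR: "\<And>b l. b \<in> Bs \<Longrightarrow> Min ((\<lambda>(b, m). rc b l m) ` (Bs \<times> Ms)) \<le> Min ((\<lambda>m. rc b l m) ` Ms)"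
  proof -
    fix b l assume b: "b \<in> Bs"
    obtain m where m: "m \<in> Ms" "Min ((\<lambda>m. rc b l m) ` Ms) = rc b l m" using minex by blast
    show "?thesis b l" using minle2[OF b m(1), of l] m(2) by simp
  qed

  have A: "charOK \<Longrightarrow> liftOK"
    unfolding liftOK_def charOK_def
    apply (rule exI[of _ \<alpha>], rule exI[of _ \<beta>c], rule exI[of _ \<gamma>], rule exI[of _ \<delta>c],
           rule exI[of _ \<mu>], rule exI[of _ \<phi>], rule exI[of _ \<psi>])
    unfolding cost_invariant_lifting_def using \<beta>c_in \<delta>c_in by auto

  have Cx: "fam1 \<Longrightarrow> dmp_xcons Bs Ss Ls Ms c \<alpha> \<beta>c \<delta>c \<phi> \<psi>"
    unfolding dmp_xcons_def
  proof (intro ballI)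
    fix b l m assume f1: fam1 and b: "b \<in> Bs" and l: "l \<in> Ls" and m: "m \<in> Ms"
    show "\<alpha> b - \<beta>c b l + \<delta>c l + real m * lsize Ss l * (\<phi> - \<psi>) \<le> c b l m"
    proof (cases "l \<in> Lb b")
      case True
      then have l1: "l \<in> L1" using LbL1 b by blast
      show ?thesis
      proof (cases "m \<in> Mb b l")
        case True2: True
        show ?thesis using dx[OF b True True2] \<beta>c_in[OF True] \<delta>c_in[OF l1] by simp
      next
        case False
        then have "rc b l m \<ge> 0" using f1 b True m unfolding fam1_def by blast
        then show ?thesis using rc_eq[of b l m] True l1 \<beta>c_in[OF True] \<delta>c_in[OF l1] by simp
      qed
    next
      case False
      show ?thesis
      proof (cases "l \<in> L1")
        case True
        have "\<beta>c b l \<ge> - rc b l m"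
          using \<beta>c_out[OF False] np_facts(2)[of "Min ((\<lambda>m. rc b l m) ` Ms)"] minle[OF m, of "\<lambda>m. rc b l m"]
          by simp
        then show ?thesis using rc_eq[of b l m] True False \<delta>c_in[OF True] by simp
      next
        case False2: False
        have "posp (Min ((\<lambda>(b, m). rc b l m) ` (Bs \<times> Ms))) \<le> posp (Min ((\<lambda>m. rc b l m) ` Ms))"
          by (rule posp_mono[OF rR[OF b]])
        moreover have "Min ((\<lambda>m. rc b l m) ` Ms) \<le> rc b l m" using minle[OF m] by simp
        moreover have "posp (Min ((\<lambda>m. rc b l m) ` Ms)) - negp (Min ((\<lambda>m. rc b l m) ` Ms))
            = Min ((\<lambda>m. rc b l m) ` Ms)" by (rule np_facts(5))
        ultimately show ?thesis using rc_eq[of b l m] False False2 \<beta>c_out[OF False] \<delta>c_out[OF False2]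
          by simp
      qed
    qed
  qed
  have C: "fam1 \<Longrightarrow> fam2 \<Longrightarrow> fam3 \<Longrightarrow> charOK"
  proof -
    assume f1: fam1 and f2: fam2 and f3: fam3
    have X: "dmp_xcons Bs Ss Ls Ms c \<alpha> \<beta>c \<delta>c \<phi> \<psi>" using Cx f1 by blast
    have s1: "\<forall>b\<in>Bs. \<forall>l\<in>Ls. \<beta>c b l \<ge> 0"
    proof (intro ballI)
      fix b l assume "b \<in> Bs" "l \<in> Ls"
      then show "\<beta>c b l \<ge> 0" using d\<beta> \<beta>c_in \<beta>c_out np_facts(1) by (cases "l \<in> Lb b") auto
    qed
    have s2: "\<forall>l\<in>Ls. \<delta>c l \<ge> 0"
    proof (intro ballI)
      fix l assume "l \<in> Ls"
      then show "\<delta>c l \<ge> 0" using d\<delta> \<delta>c_in \<delta>c_out np_facts(3) by (cases "l \<in> L1") auto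
    qed
    have Y: "\<forall>l\<in>Ls. (\<Sum>b\<in>Bs. \<beta>c b l) - \<gamma> - \<delta>c l + chi L2 l * \<mu> \<le> 0"
    proof (intro ballI)
      fix l assume l: "l \<in> Ls"
      show "(\<Sum>b\<in>Bs. \<beta>c b l) - \<gamma> - \<delta>c l + chi L2 l * \<mu> \<le> 0"
      proof (cases "l \<in> L1")
        case True
        have sp: "(\<Sum>b\<in>Bs. \<beta>c b l) = (\<Sum>b\<in>{b\<in>Bs. l \<in> Lb b}. \<beta>c b l) + (\<Sum>b\<in>{b\<in>Bs. l \<notin> Lb b}. \<beta>c b l)"
          using fin(1) by (rule sum_split)
        have e1: "(\<Sum>b\<in>{b\<in>Bs. l \<in> Lb b}. \<beta>c b l) = (\<Sum>b\<in>{b\<in>Bs. l \<in> Lb b}. \<beta> b l)"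
          using \<beta>c_in by (intro sum.cong) auto
        have e2: "(\<Sum>b\<in>{b\<in>Bs. l \<notin> Lb b}. \<beta>c b l) = (\<Sum>b\<in>{b\<in>Bs. l \<notin> Lb b}. negp (Min ((\<lambda>m. rc b l m) ` Ms)))"
          using \<beta>c_out by (intro sum.cong) auto
        show ?thesis
        proof (cases "l \<in> (\<Inter>b\<in>Bs. Lb b)")
          case True2: True
          then have e: "{b\<in>Bs. l \<notin> Lb b} = {}" by blast
          have "(\<Sum>b\<in>{b\<in>Bs. l \<notin> Lb b}. \<beta>c b l) = 0" unfolding e by simp
          then show ?thesis using sp e1 dy[OF True] \<delta>c_in[OF True] by linarith
        next
          case False
          then have "l \<in> L1 - (\<Inter>b\<in>Bs. Lb b)" using True by blast
          then have h: "- (\<Sum>b\<in>{b\<in>Bs. l \<notin> Lb b}. negp (Min ((\<lambda>m. rc b l m) ` Ms)))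
                   \<ge> (\<Sum>b\<in>{b\<in>Bs. l \<in> Lb b}. \<beta> b l) - \<gamma> - \<delta> l + chi L2 l * \<mu>"
            using f2 unfolding fam2_def by blast
          show ?thesis using h sp e1 e2 \<delta>c_in[OF True] by linarith
        qed
      next
        case False
        have "l \<notin> L2" using False L_sub by blast
        then have ch: "chi L2 l = 1" by (simp add: chi_def)
        have "(\<Sum>b\<in>Bs. \<beta>c b l) = (\<Sum>b\<in>Bs. negp (Min ((\<lambda>m. rc b l m) ` Ms)))"
          using \<beta>c_out LbL1 False by (intro sum.cong) auto
        moreover have "l \<in> Ls - L1" using l False by blast
        then have h: "- (\<Sum>b\<in>Bs. negp (Min ((\<lambda>m. rc b l m) ` Ms)))
                   + posp (Min ((\<lambda>(b, m). rc b l m) ` (Bs \<times> Ms))) \<ge> - \<gamma> + \<mu>"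
          using f3 unfolding fam3_def by blast
        ultimately show ?thesis unfolding ch using \<delta>c_out[OF False] by linarith
      qed
    qed
    show charOK unfolding charOK_def dmp_feasible_def using X s1 s2 Y d\<gamma> d\<mu> by auto
  qed

  have B: "liftOK \<Longrightarrow> fam1 \<and> fam2 \<and> fam3"
  proof -
    assume liftOK
    then obtain \<alpha>' \<beta>' \<gamma>' \<delta>' \<mu>' \<phi>' \<psi>' where
      ci: "cost_invariant_lifting Bs k Ilo Ihi L1 Lb \<alpha> \<beta> \<gamma> \<delta> \<mu> \<phi> \<psi> \<alpha>' \<beta>' \<gamma>' \<delta>' \<mu>' \<phi>' \<psi>'" and
      xc: "dmp_xcons Bs Ss Ls Ms c \<alpha>' \<beta>' \<delta>' \<phi>' \<psi>'" and
      df: "dmp_feasible Bs Ss Ls Ms c P L2 \<alpha>' \<beta>' \<gamma>' \<delta>' \<mu>' \<phi>' \<psi>'"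
      unfolding liftOK_def by blast
    have eqs: "\<gamma>' = \<gamma>" "\<mu>' = \<mu>" "\<phi>' = \<phi>" "\<psi>' = \<psi>" using ci unfolding cost_invariant_lifting_def by auto
    have aeq: "\<And>b. b \<in> Bs \<Longrightarrow> \<alpha>' b = \<alpha> b" using ci unfolding cost_invariant_lifting_def by auto
    have beq: "\<And>b l. b \<in> Bs \<Longrightarrow> l \<in> Lb b \<Longrightarrow> \<beta>' b l = \<beta> b l" using ci unfolding cost_invariant_lifting_def by auto
    have deq: "\<And>l. l \<in> L1 \<Longrightarrow> \<delta>' l = \<delta> l" using ci unfolding cost_invariant_lifting_def by auto
    have X: "\<And>b l m. b \<in> Bs \<Longrightarrow> l \<in> Ls \<Longrightarrow> m \<in> Ms \<Longrightarrow>
        \<alpha> b - \<beta>' b l + \<delta>' l + real m * lsize Ss l * (\<phi> - \<psi>) \<le> c b l m"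
      using xc aeq unfolding dmp_xcons_def eqs by force
    have bpos: "\<And>b l. b \<in> Bs \<Longrightarrow> l \<in> Ls \<Longrightarrow> \<beta>' b l \<ge> 0" using df unfolding dmp_feasible_def by blast
    have d0: "\<And>l. l \<in> Ls \<Longrightarrow> \<delta>' l \<ge> 0" using df unfolding dmp_feasible_def by blast
    have Y: "\<And>l. l \<in> Ls \<Longrightarrow> (\<Sum>b\<in>Bs. \<beta>' b l) - \<gamma> - \<delta>' l + chi L2 l * \<mu> \<le> 0"
      using df unfolding dmp_feasible_def eqs by blast
    have f1: fam1 unfolding fam1_def
    proof (intro ballI)
      fix b l m assume b: "b \<in> Bs" and l: "l \<in> Lb b" and m: "m \<in> Ms - Mb b l"
      have l1: "l \<in> L1" using LbL1[OF b l] .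
      show "rc b l m \<ge> 0" using X[OF b L1Ls[OF l1], of m] m beq[OF b l] deq[OF l1] rc_eq[of b l m] l l1 by simp
    qed
    have bnd: "\<And>b l. b \<in> Bs \<Longrightarrow> l \<in> Ls \<Longrightarrow> l \<notin> Lb b \<Longrightarrow>
        \<beta>' b l \<ge> (if l \<in> L1 then 0 else \<delta>' l) - Min ((\<lambda>m. rc b l m) ` Ms)"
    proof -
      fix b l assume b: "b \<in> Bs" and l: "l \<in> Ls" and nl: "l \<notin> Lb b"
      obtain m where m: "m \<in> Ms" "Min ((\<lambda>m. rc b l m) ` Ms) = rc b l m" using minex by blast
      show "?thesis b l"
        using X[OF b l m(1)] m(2) rc_eq[of b l m] nl deq[of l] by (cases "l \<in> L1") auto
    qed
    have f2: fam2 unfolding fam2_def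
    proof (intro ballI)
      fix l assume l: "l \<in> L1 - (\<Inter>b\<in>Bs. Lb b)"
      then have l1: "l \<in> L1" and ls: "l \<in> Ls" using L1Ls by auto
      have sp: "(\<Sum>b\<in>Bs. \<beta>' b l) = (\<Sum>b\<in>{b\<in>Bs. l \<in> Lb b}. \<beta>' b l) + (\<Sum>b\<in>{b\<in>Bs. l \<notin> Lb b}. \<beta>' b l)"
        using fin(1) by (rule sum_split)
      have e1: "(\<Sum>b\<in>{b\<in>Bs. l \<in> Lb b}. \<beta>' b l) = (\<Sum>b\<in>{b\<in>Bs. l \<in> Lb b}. \<beta> b l)"
        using beq by (intro sum.cong) auto
      have e2: "(\<Sum>b\<in>{b\<in>Bs. l \<notin> Lb b}. negp (Min ((\<lambda>m. rc b l m) ` Ms))) \<le> (\<Sum>b\<in>{b\<in>Bs. l \<notin> Lb b}. \<beta>' b l)"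
      proof (rule sum_mono)
        fix b assume "b \<in> {b\<in>Bs. l \<notin> Lb b}"
        then have b: "b \<in> Bs" and nl: "l \<notin> Lb b" by auto
        show "negp (Min ((\<lambda>m. rc b l m) ` Ms)) \<le> \<beta>' b l"
          using negp_le[OF bpos[OF b ls]] bnd[OF b ls nl] l1 by simp
      qed
      show "- (\<Sum>b\<in>{b\<in>Bs. l \<notin> Lb b}. negp (Min ((\<lambda>m. rc b l m) ` Ms)))
                   \<ge> (\<Sum>b\<in>{b\<in>Bs. l \<in> Lb b}. \<beta> b l) - \<gamma> - \<delta> l + chi L2 l * \<mu>"
        using Y[OF ls] sp e1 e2 deq[OF l1] by linarith
    qed
    have f3: fam3 unfolding fam3_def
    proof (intro ballI)
      fix l assume l: "l \<in> Ls - L1"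
      then have ls: "l \<in> Ls" and nl1: "l \<notin> L1" by auto
      have nlb: "\<And>b. b \<in> Bs \<Longrightarrow> l \<notin> Lb b" using LbL1 nl1 by blast
      have "l \<notin> L2" using nl1 L_sub by blast
      then have ch: "chi L2 l = 1" by (simp add: chi_def)
      define r where "r = (\<lambda>b. Min ((\<lambda>m. rc b l m) ` Ms))"
      define R where "R = Min ((\<lambda>(b, m). rc b l m) ` (Bs \<times> Ms))"
      obtain b0 m0 where b0: "b0 \<in> Bs" "m0 \<in> Ms" "R = rc b0 l m0" using minex2[of l] unfolding R_def by blast
      have "r b0 \<le> R" using minle[OF b0(2), of "\<lambda>m. rc b0 l m"] b0(3) unfolding r_def by simp
      moreover have "R \<le> r b0" using rR[OF b0(1), of l] unfolding r_def R_def .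
      ultimately have rb0: "r b0 = R" by simp
      have bb: "\<And>b. b \<in> Bs \<Longrightarrow> \<beta>' b l \<ge> \<delta>' l - r b" unfolding r_def
      proof -
        fix b assume b: "b \<in> Bs"
        show "\<beta>' b l \<ge> \<delta>' l - Min ((\<lambda>m. rc b l m) ` Ms)" using bnd[OF b ls nlb[OF b]] nl1 by simp
      qed
      have bn: "\<And>b. b \<in> Bs \<Longrightarrow> \<beta>' b l \<ge> negp (r b)"
      proof -
        fix b assume b: "b \<in> Bs"
        show "\<beta>' b l \<ge> negp (r b)" using negp_le[OF bpos[OF b ls]] bb[OF b] d0[OF ls] by simp
      qed
      have s1: "(\<Sum>b\<in>Bs. \<beta>' b l) = \<beta>' b0 l + (\<Sum>b\<in>Bs - {b0}. \<beta>' b l)"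
        using fin(1) b0(1) by (rule sum.remove)
      have s2: "(\<Sum>b\<in>Bs. negp (r b)) = negp (r b0) + (\<Sum>b\<in>Bs - {b0}. negp (r b))"
        using fin(1) b0(1) by (rule sum.remove)
      have s3: "(\<Sum>b\<in>Bs - {b0}. negp (r b)) \<le> (\<Sum>b\<in>Bs - {b0}. \<beta>' b l)"
        using bn by (intro sum_mono) auto
      have pn: "posp R - negp R = R" by (rule np_facts(5))
      have "- (\<Sum>b\<in>Bs. negp (r b)) + posp R \<ge> - \<gamma> + \<mu>"
        using Y[OF ls] ch s1 s2 s3 pn rb0 bb[OF b0(1)] by simp
      then show "- (\<Sum>b\<in>Bs. negp (Min ((\<lambda>m. rc b l m) ` Ms)))
                   + posp (Min ((\<lambda>(b, m). rc b l m) ` (Bs \<times> Ms))) \<ge> - \<gamma> + \<mu>"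
        unfolding r_def R_def .
    qed
    show ?thesis using f1 f2 f3 by blast
  qed

  have D: "fam1 \<Longrightarrow> fam2 \<Longrightarrow> fam3 \<Longrightarrow> mp_optimal Bs Ss Ls Ms c k Ilo Ihi P L2 (xbar Bs Lb Mb x) (ybar L1 y) p"
  proof -
    assume f1: fam1 and f2: fam2 and f3: fam3
    have co: charOK using C f1 f2 f3 .
    then have dfc: "dmp_feasible Bs Ss Ls Ms c P L2 \<alpha> \<beta>c \<gamma> \<delta>c \<mu> \<phi> \<psi>" unfolding charOK_def by blast
    have rf: "rmp_feasible Bs Ss k Ilo Ihi L1 L2 Lb Mb x y p" using primal_opt unfolding rmp_optimal_def by blast
    have mf: "mp_feasible Bs Ss Ls Ms k Ilo Ihi L2 (xbar Bs Lb Mb x) (ybar L1 y) p"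
      and oe: "mp_obj Bs Ls Ms c P (xbar Bs Lb Mb x) p = rmp_obj Bs c P Lb Mb x p"
      using xbar_feas[OF fin(1) fin(7) fin(5) L_sub M_sub rf] by blast+
    show ?thesis unfolding mp_optimal_def
    proof (intro conjI allI impI)
      show "mp_feasible Bs Ss Ls Ms k Ilo Ihi L2 (xbar Bs Lb Mb x) (ybar L1 y) p" by (rule mf)
      fix x' y' p' assume "mp_feasible Bs Ss Ls Ms k Ilo Ihi L2 x' y' p'"
      from weak_dual[OF fin(1) fin(7) fin(5) this dfc]
      show "mp_obj Bs Ls Ms c P (xbar Bs Lb Mb x) p \<le> mp_obj Bs Ls Ms c P x' p'"
        using oe same_value by simp
    qed
  qed

  have main: "(liftOK \<longleftrightarrow> charOK) \<and>
        ((fam1 \<and> fam2 \<and> fam3) \<longrightarrow>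
           mp_optimal Bs Ss Ls Ms c k Ilo Ihi P L2 (xbar Bs Lb Mb x) (ybar L1 y) p) \<and>
        ((fam1 \<and> fam2 \<and> fam3) \<longleftrightarrow> charOK) \<and>
        (\<not> (fam1 \<and> fam2 \<and> fam3) \<longrightarrow> \<not> liftOK)"
    using A B C D by blast
  show ?thesis using main
    unfolding Let_def charOK_def liftOK_def fam1_def fam2_def fam3_def rc_def \<beta>c_def \<delta>c_def .
qed

end
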